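(* Let $\chi$ be a kernel as described in the context with $m_1(\chi,u)=0$ for all $u\in\mathbb{R}^+$. Let $f\in C^{(2)}(\mathbb{R}^+)$ and suppose $$\|I_w^{\chi}f-f\|_\infty=o(w^{-1})\quad\text{as } w\to+\infty.$$ Then $f$ is constant on $\mathbb{R}^+$.
   Context: A kernel is a continuous function $\chi:\mathbb{R}^+\to\mathbb{R}$ satisfying: (i) $\sum_{k=-\infty}^{+\infty}\chi(e^{-k}u)=1$ for every $u\in\mathbb{R}^+$; (ii) $M_2(\chi)<+\infty$ and $\lim_{\gamma\to+\infty}\sum_{|k-\log u|>\gamma}|\chi(e^{-k}u)|\,|k-\log u|^2=0$ uniformly with respect to $u\in\mathbb{R}^+$. Algebraic moments: $m_\nu(\chi,u)=\sum_{k\in\mathbb{Z}}\chi(e^{-k}u)(k-\log u)^\nu$; absolute moments: $M_\nu(\chi,u)=\sum_{k\in\mathbb{Z}}|\chi(e^{-k}u)|\,|k-\log u|^\nu$, $M_\nu(\chi)=\sup_{u>0}M_\nu(\chi,u)$. For $w>0$, $x\in\mathbb{R}^+$: $(I_w^{\chi}f)(x)=\sum_{k\in\mathbb{Z}}\chi(e^{-k}x^w)\,w\int_{k/w}^{(k+1)/w}f(e^u)\,du$; $\|\cdot\|_\infty$ is the sup norm on $\mathbb{R}^+$. Mellin differential operator: $(\theta f)(x)=xf'(x)$, $\theta^r=\theta(\theta^{r-1})$. $C(\mathbb{R}^+)$ denotes the bounded continuous functions on $\mathbb{R}^+$, and $C^{(2)}(\mathbb{R}^+)$ the $f\in C(\mathbb{R}^+)$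 such that $\theta f$ and $\theta^2 f$ exist and belong to $C(\mathbb{R}^+)$. *)

theory Defs
  imports "HOL-Analysis.Analysis"
begin

definition abs_moment :: "nat \<Rightarrow> (real \<Rightarrow> real) \<Rightarrow> real \<Rightarrow> real" where
  "abs_moment \<nu> K u = infsum (\<lambda>k::int. \<bar>K (exp (- real_of_int k) * u)\<bar> * \<bar>real_of_int k - ln u\<bar> ^ \<nu>) UNIV"

definition alg_moment :: "nat \<Rightarrow> (real \<Rightarrow> real) \<Rightarrow> real \<Rightarrow> real" where
  "alg_moment \<nu> K u = infsum (\<lambda>k::int. K (exp (- real_of_int k) * u) * (real_of_int k - ln u) ^ \<nu>) UNIV"

text \<open>Kernel: continuous on R+, conditions (i) and (ii).
  M_2(chi) < infinity is stated as: each series defining M_2(chi,u) converges and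
  the values are uniformly bounded over u > 0.\<close>
definition is_kernel :: "(real \<Rightarrow> real) \<Rightarrow> bool" where
  "is_kernel K \<longleftrightarrow>
     continuous_on {0<..} K \<and>
     (\<forall>u>0. ((\<lambda>k::int. K (exp (- real_of_int k) * u)) has_sum 1) UNIV) \<and>
     (\<forall>u>0. (\<lambda>k::int. \<bar>K (exp (- real_of_int k) * u)\<bar> * \<bar>real_of_int k - ln u\<bar> ^ 2) summable_on UNIV) \<and>
     (\<exists>B. \<forall>u>0. abs_moment 2 K u \<le> B) \<and>
     (\<forall>\<epsilon>>0. \<exists>\<gamma>0. \<forall>\<gamma>\<ge>\<gamma>0. \<forall>u>0.
        infsum (\<lambda>k::int. \<bar>K (exp (- real_of_int k) * u)\<bar> * \<bar>real_of_int k - ln u\<bar> ^ 2)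
           {k::int. \<bar>real_of_int k - ln u\<bar> > \<gamma>} < \<epsilon>)"

definition kantorovich_op :: "(real \<Rightarrow> real) \<Rightarrow> real \<Rightarrow> (real \<Rightarrow> real) \<Rightarrow> real \<Rightarrow> real" where
  "kantorovich_op K w f x =
     infsum (\<lambda>k::int. K (exp (- real_of_int k) * x powr w) *
        (w * integral {real_of_int k / w .. (real_of_int k + 1) / w} (\<lambda>u. f (exp u)))) UNIV"

definition bcont_pos :: "(real \<Rightarrow> real) \<Rightarrow> bool" where
  "bcont_pos g \<longleftrightarrow> continuous_on {0<..} g \<and> (\<exists>B. \<forall>x>0. \<bar>g x\<bar> \<le> B)"

text \<open>C^(2)(R+): f, theta f = x f', theta^2 f exist and are bounded continuous on R+.\<close>
definition C2_mellin :: "(real \<Rightarrow> real) \<Rightarrow> bool" where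
  "C2_mellin f \<longleftrightarrow> bcont_pos f \<and>
     (\<exists>\<theta>1 \<theta>2. (\<forall>x>0. (f has_real_derivative (\<theta>1 x / x)) (at x)) \<and>
              (\<forall>x>0. (\<theta>1 has_real_derivative (\<theta>2 x / x)) (at x)) \<and>
              bcont_pos \<theta>1 \<and> bcont_pos \<theta>2)"

end

theory Submission
  imports Defs
begin


lemma K_bdd:
  assumes "continuous_on {0<..} (K::real\<Rightarrow>real)"
  shows "\<exists>C\<ge>0. \<forall>y\<in>{exp (-1)..exp 1}. \<bar>K y\<bar> \<le> C"
proof -
  have "continuous_on {exp (-1)..exp 1} K"
  proof (rule continuous_on_subset[OF assms])
    show "{exp (-1)..exp 1} \<subseteq> {0::real<..}"
          proof
      fix x :: real assume "x \<in> {exp (-1)..exp 1}"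
      then have "exp (-1) \<le> x" by simp
      moreover have "0 < exp (-1::real)" by simp
      ultimately have "0 < x" by linarith
      then show "x \<in> {0<..}" by simp
    qed
  qed
  then have "compact (K ` {exp (-1)..exp 1})"
    by (rule compact_continuous_image) auto
  then obtain C where "\<forall>z\<in>K ` {exp (-1)..exp 1}. norm z \<le> C"
    using compact_imp_bounded bounded_iff by metis
  then show ?thesis
    by (intro exI[of _ "max C 0"]) auto
qed

lemma kernel_abs_bound:
  assumes "is_kernel K"
  shows "\<exists>M. \<forall>u>0. (\<lambda>k::int. \<bar>K (exp (- real_of_int k) * u)\<bar> * ((real_of_int k - ln u)^2 + 1)) summable_on UNIV
     \<and> infsum (\<lambda>k::int. \<bar>K (exp (- real_of_int k) * u)\<bar> * ((real_of_int k - ln u)^2 + 1)) UNIV \<le> M"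
proof -
  have kc: "continuous_on {0<..} K"
    and k1: "\<forall>u>0. ((\<lambda>k::int. K (exp (- real_of_int k) * u)) has_sum 1) UNIV"
    and k2: "\<forall>u>0. (\<lambda>k::int. \<bar>K (exp (- real_of_int k) * u)\<bar> * \<bar>real_of_int k - ln u\<bar> ^ 2) summable_on UNIV"
    and k3: "\<exists>B. \<forall>u>0. abs_moment 2 K u \<le> B"
    using assms by (simp_all add: is_kernel_def)
  from k3 obtain B where B: "\<forall>u>0. abs_moment 2 K u \<le> B" by blast
  from K_bdd[OF kc] obtain C where C0: "C \<ge> 0" and C: "\<forall>y\<in>{exp (-1)..exp 1}. \<bar>K y\<bar> \<le> C"
    by blast
  have "\<forall>u>0. (\<lambda>k::int. \<bar>K (exp (- real_of_int k) * u)\<bar> * ((real_of_int k - ln u)^2 + 1)) summable_on UNIV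
     \<and> infsum (\<lambda>k::int. \<bar>K (exp (- real_of_int k) * u)\<bar> * ((real_of_int k - ln u)^2 + 1)) UNIV \<le> 2*B + 2*C"
  proof (intro allI impI)
    fix u :: real assume u: "u > 0"
    define a where "a k = \<bar>K (exp (- real_of_int k) * u)\<bar>" for k :: int
    define q where "q k = a k * \<bar>real_of_int k - ln u\<bar> ^ 2" for k :: int
    have s1: "q summable_on UNIV" using k2[rule_format, OF u] unfolding q_def a_def .
    have mq: "infsum q UNIV \<le> B" using B[rule_format, OF u] unfolding abs_moment_def q_def a_def .
    have "(\<lambda>k::int. K (exp (- real_of_int k) * u)) summable_on UNIV"
      using k1[rule_format, OF u] unfolding summable_on_def by blast
    then have "(\<lambda>k::int. norm (K (exp (- real_of_int k) * u))) summable_on UNIV"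
      by (rule summable_on_iff_abs_summable_on_real[THEN iffD1])
    then have s0: "a summable_on UNIV"
      unfolding a_def real_norm_def .
    define S where "S = {\<lfloor>ln u\<rfloor>, \<lfloor>ln u\<rfloor> + 1}"
    define c where "c k = (if k \<in> S then C else 0)" for k :: int
    have sc: "c summable_on UNIV"
      by (rule summable_on_cong_neutral[where f="\<lambda>_. C" and S=S and g=c and T=UNIV, THEN iffD1]) (auto simp: c_def S_def)
    have ic: "infsum c UNIV = infsum (\<lambda>_. C) S"
      by (rule infsum_cong_neutral) (auto simp: c_def)
    also have "\<dots> \<le> 2 * C" unfolding S_def using C0 by simp
    finally have ic2: "infsum c UNIV \<le> 2 * C" .
    have ak: "a k \<le> q k + c k" for k
    proof (cases "k \<in> S")
      case True
      have fl: "real_of_int \<lfloor>ln u\<rfloor> \<le> ln u" "ln u < real_of_int \<lfloor>ln u\<rfloor> + 1"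
        by linarith+
      from True have "k = \<lfloor>ln u\<rfloor> \<or> k = \<lfloor>ln u\<rfloor> + 1" unfolding S_def by simp
      then have "real_of_int k = real_of_int \<lfloor>ln u\<rfloor> \<or> real_of_int k = real_of_int \<lfloor>ln u\<rfloor> + 1"
        by auto
      then have "-1 \<le> ln u - k \<and> ln u - k \<le> 1" by (elim disjE) (use fl in linarith)+
      then have "ln u - k \<in> {-1..1}" by simp
      moreover have "exp (- real_of_int k) * u = exp (ln u - k)"
        using u by (simp add: exp_diff exp_minus divide_inverse mult.commute)
      ultimately have "exp (- real_of_int k) * u \<in> {exp (-1)..exp 1}" by auto
      then have "a k \<le> C" using C unfolding a_def by blast
      moreover have "q k \<ge> 0" unfolding q_def a_def by simp
      ultimately show ?thesis using True unfolding c_def by simp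
    next
      case False
      have fl: "real_of_int \<lfloor>ln u\<rfloor> \<le> ln u" "ln u < real_of_int \<lfloor>ln u\<rfloor> + 1"
        by linarith+
      from False have "k \<le> \<lfloor>ln u\<rfloor> - 1 \<or> k \<ge> \<lfloor>ln u\<rfloor> + 2" unfolding S_def by auto
      then have "real_of_int k \<le> real_of_int \<lfloor>ln u\<rfloor> - 1 \<or> real_of_int k \<ge> real_of_int \<lfloor>ln u\<rfloor> + 2"
        by (metis of_int_diff of_int_le_iff of_int_add of_int_1 of_int_numeral)
      then have "\<bar>real_of_int k - ln u\<bar> \<ge> 1" by (elim disjE) (use fl in linarith)+
      then have "\<bar>real_of_int k - ln u\<bar>^2 \<ge> 1" by (rule one_le_power)
      then show ?thesis using False unfolding q_def c_def a_def
        by (simp add: mult_le_cancel_left1)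
    qed
    have sqc: "(\<lambda>k. q k + c k) summable_on UNIV" using s1 sc by (rule summable_on_add)
    have "infsum a UNIV \<le> infsum (\<lambda>k. q k + c k) UNIV"
      by (rule infsum_mono[OF s0 sqc ak])
    also have "\<dots> = infsum q UNIV + infsum c UNIV" by (rule infsum_add[OF s1 sc])
    finally have ia: "infsum a UNIV \<le> B + 2*C" using mq ic2 by linarith
    have eq: "(\<lambda>k::int. \<bar>K (exp (- real_of_int k) * u)\<bar> * ((real_of_int k - ln u)^2 + 1)) = (\<lambda>k. q k + a k)"
      by (auto simp: q_def a_def algebra_simps)
    show "(\<lambda>k::int. \<bar>K (exp (- real_of_int k) * u)\<bar> * ((real_of_int k - ln u)^2 + 1)) summable_on UNIV
     \<and> infsum (\<lambda>k::int. \<bar>K (exp (- real_of_int k) * u)\<bar> * ((real_of_int k - ln u)^2 + 1)) UNIV \<le> 2*B + 2*C"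
      unfolding eq using infsum_add[OF s1 s0] summable_on_add[OF s1 s0] mq ia by linarith
  qed
  then show ?thesis by blast
qed


lemma lip_deriv:
  fixes g g' :: "real \<Rightarrow> real"
  assumes d: "\<And>x. (g has_real_derivative g' x) (at x)" and b: "\<And>x. \<bar>g' x\<bar> \<le> L"
  shows "\<bar>g u - g t\<bar> \<le> L * \<bar>u - t\<bar>"
proof -
  have "norm (g u - g t) \<le> L * norm (u - t)"
    by (rule field_differentiable_bound[where S=UNIV and f'=g'])
       (auto intro: has_field_derivative_at_within d simp: b)
  then show ?thesis by simp
qed

lemma taylor2:
  fixes g g' g'' :: "real \<Rightarrow> real"
  assumes d1: "\<And>x. (g has_real_derivative g' x) (at x)"
    and d2: "\<And>x. (g' has_real_derivative g'' x) (at x)"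
    and b: "\<And>x. \<bar>g'' x\<bar> \<le> L"
  shows "\<bar>g u - g t - g' t * (u - t)\<bar> \<le> L * (u - t)^2"
proof -
  define h where "h z = g z - g t - g' t * (z - t)" for z
  have dh: "(h has_real_derivative (g' z - g' t)) (at z)" for z
    unfolding h_def by (auto intro!: derivative_eq_intros d1)
  let ?S = "closed_segment t u"
  have bh: "\<bar>g' z - g' t\<bar> \<le> L * \<bar>u - t\<bar>" if "z \<in> ?S" for z
  proof -
    have "\<bar>g' z - g' t\<bar> \<le> L * \<bar>z - t\<bar>" by (rule lip_deriv[OF d2 b])
    moreover have "\<bar>z - t\<bar> \<le> \<bar>u - t\<bar>" using that
      by (auto simp: closed_segment_eq_real_ivl split: if_splits)
    moreover have "L \<ge> 0" using b[of 0] by simp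
    ultimately show ?thesis by (simp add: mult_left_mono order_trans)
  qed
  have "norm (h u - h t) \<le> (L * \<bar>u - t\<bar>) * norm (u - t)"
  proof (rule field_differentiable_bound[where S="?S" and f'="\<lambda>z. g' z - g' t"])
    show "convex ?S" by simp
    show "u \<in> ?S" by simp
    show "t \<in> ?S" by simp
    fix z assume z: "z \<in> ?S"
    show "(h has_field_derivative (g' z - g' t)) (at z within ?S)"
      by (rule has_field_derivative_at_within[OF dh])
    show "norm (g' z - g' t) \<le> L * \<bar>u - t\<bar>" using bh[OF z] by simp
  qed
  then show ?thesis by (simp add: h_def power2_eq_square abs_mult_self_eq mult.assoc)
qed

lemma int_taylor:
  fixes g g' g'' :: "real \<Rightarrow> real"
  assumes d1: "\<And>x. (g has_real_derivative g' x) (at x)"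
    and d2: "\<And>x. (g' has_real_derivative g'' x) (at x)"
    and b: "\<And>x. \<bar>g'' x\<bar> \<le> L"
    and ab: "a \<le> b"
  shows "\<bar>integral {a..b} g - (g t * b + g' t * (b - t)^2 / 2) + (g t * a + g' t * (a - t)^2 / 2)\<bar>
          \<le> L * max ((a - t)^2) ((b - t)^2) * (b - a)"
proof -
  define P where "P x = g t * x + g' t * (x - t)^2 / 2" for x
  have "((\<lambda>x. g t + g' t * (x - t)) has_integral (P b - P a)) {a..b}"
  proof (rule fundamental_theorem_of_calculus[OF ab])
    fix x assume "x \<in> {a..b}"
    have "(P has_real_derivative (g t + g' t * (x - t))) (at x)"
      unfolding P_def by (auto intro!: derivative_eq_intros simp: field_simps)
    then show "(P has_vector_derivative (g t + g' t * (x - t))) (at x within {a..b})"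
      using has_real_derivative_iff_has_vector_derivative has_vector_derivative_at_within by blast
  qed
  moreover have "continuous_on {a..b} g"
    using d1 by (meson DERIV_isCont continuous_at_imp_continuous_on)
  then have "(g has_integral integral {a..b} g) {a..b}"
    by (intro integrable_integral integrable_continuous_interval)
  ultimately have hi: "((\<lambda>x. g x - (g t + g' t * (x - t))) has_integral (integral {a..b} g - (P b - P a))) {a..b}"
    by (rule has_integral_diff[rotated])
  have "norm (integral {a..b} g - (P b - P a)) \<le> (L * max ((a - t)^2) ((b - t)^2)) * Henstock_Kurzweil_Integration.content {a..b}"
  proof (rule has_integral_bound_real[OF _ _ hi, where S="{}"])
    show "0 \<le> L * max ((a - t)^2) ((b - t)^2)" using b[of 0] by (intro mult_nonneg_nonneg) (auto simp: le_max_iff_disj)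
    fix x assume x: "x \<in> {a..b} - {}"
    have "\<bar>g x - g t - g' t * (x - t)\<bar> \<le> L * (x - t)^2" by (rule taylor2[OF d1 d2 b])
    moreover have "(x - t)^2 \<le> max ((a - t)^2) ((b - t)^2)"
    proof -
      have "\<bar>x - t\<bar> \<le> max \<bar>a - t\<bar> \<bar>b - t\<bar>" using x by auto
      then have "\<bar>x - t\<bar>^2 \<le> (max \<bar>a - t\<bar> \<bar>b - t\<bar>)^2" by (rule power_mono) simp
      then show ?thesis by (simp add: max_def split: if_splits)
    qed
    moreover have "L \<ge> 0" using b[of 0] by simp
    ultimately show "norm (g x - (g t + g' t * (x - t))) \<le> L * max ((a - t)^2) ((b - t)^2)"
      by (smt (verit) mult_left_mono real_norm_def)
  qed auto
  then show ?thesis using ab by (simp add: P_def algebra_simps)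
qed



lemma summable_dom:
  fixes f g :: "'a \<Rightarrow> real"
  assumes "g summable_on A" "\<And>x. x \<in> A \<Longrightarrow> \<bar>f x\<bar> \<le> g x"
  shows "f summable_on A" "(\<lambda>x. \<bar>f x\<bar>) summable_on A"
proof -
  show ab: "(\<lambda>x. \<bar>f x\<bar>) summable_on A"
    by (rule summable_on_comparison_test[OF assms(1)]) (use assms(2) in auto)
  have "(\<lambda>x. norm (f x)) summable_on A" using ab by simp
  then show "f summable_on A"
    by (rule summable_on_iff_abs_summable_on_real[THEN iffD2])
qed

lemma voron:
  fixes a I :: "int \<Rightarrow> real"
  assumes h0: "(a has_sum 1) UNIV"
    and m1: "infsum (\<lambda>k. a k * (real_of_int k - s)) UNIV = 0"
    and sa: "(\<lambda>k. \<bar>a k\<bar> * ((real_of_int k - s)^2 + 1)) summable_on UNIV"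
    and Ma: "infsum (\<lambda>k. \<bar>a k\<bar> * ((real_of_int k - s)^2 + 1)) UNIV \<le> M"
    and Ib: "\<And>k. \<bar>I k - c - \<theta> * (real_of_int k - s + 1/2) / w\<bar> \<le> 2 * L * ((real_of_int k - s)^2 + 1) / w^2"
    and w: "w > 0" and L: "L \<ge> 0"
  shows "\<bar>infsum (\<lambda>k. a k * I k) UNIV - c - \<theta> / (2 * w)\<bar> \<le> 2 * L * M / w^2"
proof -
  define E where "E k = I k - c - \<theta> * (real_of_int k - s + 1/2) / w" for k
  define D where "D k = \<bar>a k\<bar> * ((real_of_int k - s)^2 + 1)" for k
  have s1: "(\<lambda>k. a k * (real_of_int k - s)) summable_on UNIV"
  proof (rule summable_dom(1)[OF sa])
    fix k :: int
    have "\<bar>real_of_int k - s\<bar> \<le> (real_of_int k - s)^2 + 1"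
    proof -
      define y where "y = \<bar>real_of_int k - s\<bar>"
      have "0 \<le> (y - 1/2)^2" by simp
      moreover have "(y - 1/2)^2 = y^2 - y + 1/4" by (simp add: power2_eq_square algebra_simps)
      moreover have "(real_of_int k - s)^2 = y^2" unfolding y_def by simp
      ultimately show ?thesis unfolding y_def[symmetric] by linarith
    qed
    then show "\<bar>a k * (real_of_int k - s)\<bar> \<le> \<bar>a k\<bar> * ((real_of_int k - s)^2 + 1)"
      by (simp add: abs_mult mult_left_mono)
  qed
  have h1: "((\<lambda>k. a k * (real_of_int k - s)) has_sum 0) UNIV"
    using has_sum_infsum[OF s1] m1 by simp
  have sD2: "(\<lambda>k. (2 * L / w^2) * D k) summable_on UNIV"
    unfolding D_def by (rule summable_on_cmult_right[OF sa])
  have dom: "\<bar>a k * E k\<bar> \<le> (2 * L / w^2) * D k" for k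
  proof -
    have "\<bar>a k * E k\<bar> = \<bar>a k\<bar> * \<bar>E k\<bar>" by (simp add: abs_mult)
    also have "\<dots> \<le> \<bar>a k\<bar> * (2 * L * ((real_of_int k - s)^2 + 1) / w^2)"
      by (rule mult_left_mono[OF _ abs_ge_zero]) (use Ib[of k] in \<open>simp add: E_def\<close>)
    also have "\<dots> = (2 * L / w^2) * D k" unfolding D_def using w by (simp add: field_simps)
    finally show ?thesis .
  qed
  have sE: "(\<lambda>k. a k * E k) summable_on UNIV" "(\<lambda>k. \<bar>a k * E k\<bar>) summable_on UNIV"
    using summable_dom[OF sD2 dom] by auto
  define R where "R = infsum (\<lambda>k. a k * E k) UNIV"
  have h2: "((\<lambda>k. a k * E k) has_sum R) UNIV" unfolding R_def using sE(1) by simp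
  have hall: "((\<lambda>k. c * a k + (\<theta> / w) * (a k * (real_of_int k - s)) + (\<theta> / (2 * w)) * a k + a k * E k)
     has_sum (c * 1 + (\<theta> / w) * 0 + (\<theta> / (2 * w)) * 1 + R)) UNIV"
    by (intro has_sum_add has_sum_cmult_right h0 h1 h2)
  have eq: "c * a k + (\<theta> / w) * (a k * (real_of_int k - s)) + (\<theta> / (2 * w)) * a k + a k * E k = a k * I k" for k
    unfolding E_def using w by (simp add: field_simps)
  have "infsum (\<lambda>k. a k * I k) UNIV = c + \<theta> / (2 * w) + R"
    using hall unfolding eq by (simp add: infsumI)
  moreover have "\<bar>R\<bar> \<le> 2 * L * M / w^2"
  proof -
    have "\<bar>R\<bar> \<le> infsum (\<lambda>k. \<bar>a k * E k\<bar>) UNIV"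
      unfolding R_def using norm_infsum_bound[of "\<lambda>k. a k * E k" UNIV] sE(2) by simp
    also have "\<dots> \<le> infsum (\<lambda>k. (2 * L / w^2) * D k) UNIV"
      by (rule infsum_mono[OF sE(2) sD2 dom])
    also have "\<dots> = (2 * L / w^2) * infsum D UNIV"
      by (rule infsum_cmult_right) (use sa in \<open>simp add: D_def\<close>)
    also have "\<dots> \<le> (2 * L / w^2) * M"
      using Ma L w unfolding D_def by (intro mult_left_mono) auto
    finally show ?thesis by simp
  qed
  ultimately show ?thesis by simp
qed

lemma alg_step:
  fixes w J G T L t d a b :: real
  assumes w: "w > 0" and L: "L \<ge> 0" and ad: "a = d / w + t" and bd: "b = (d + 1) / w + t"
    and h0: "\<bar>J - (G * b + T * (b - t)^2 / 2) + (G * a + T * (a - t)^2 / 2)\<bar>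
            \<le> L * max ((a - t)^2) ((b - t)^2) * (b - a)"
  shows "\<bar>w * J - G - T * (d + 1/2) / w\<bar> \<le> 2 * L * (d^2 + 1) / w^2"
proof -
  have e1: "b - t = (d + 1) / w" "a - t = d / w" "b - a = 1 / w"
    using w unfolding ad bd by (simp_all add: field_simps)
  note h = h0[unfolded e1, unfolded ad bd]
  have p: "(d + 1) / w - d / w = 1 / w" using w by (simp add: diff_divide_distrib[symmetric])
  have p2: "((d + 1) / w)^2 - (d / w)^2 = (2 * d + 1) / w^2"
    by (simp add: power_divide diff_divide_distrib[symmetric] power2_eq_square algebra_simps)
  have e: "w * J - G - T * (d + 1/2) / w =
     w * (J - (G * ((d + 1) / w + t) + T * ((d + 1) / w)^2 / 2) + (G * (d / w + t) + T * (d / w)^2 / 2))"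
  proof -
    have "w * (J - (G * ((d + 1) / w + t) + T * ((d + 1) / w)^2 / 2) + (G * (d / w + t) + T * (d / w)^2 / 2))
        = w * J - w * G * ((d + 1) / w - d / w) - w * T * (((d + 1) / w)^2 - (d / w)^2) / 2"
    proof -
      have gen: "\<And>P Q. w * (J - (G * (P + t) + T * P^2 / 2) + (G * (Q + t) + T * Q^2 / 2))
          = w * J - w * G * (P - Q) - w * T * (P^2 - Q^2) / 2"
        by (simp add: field_simps)
      show ?thesis by (rule gen)
    qed
    also have "\<dots> = w * J - G - T * (d + 1/2) / w"
      unfolding p p2 using w by (simp add: field_simps power2_eq_square)
    finally show ?thesis by simp
  qed
  have m: "max ((d / w)^2) (((d + 1) / w)^2) \<le> 2 * (d^2 + 1) / w^2"
  proof -
    have "0 \<le> (d - 1)^2" by simp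
    then have "(d + 1)^2 \<le> 2 * (d^2 + 1)" by (simp add: power2_eq_square algebra_simps)
    moreover have "d^2 \<le> 2 * (d^2 + 1)" by simp
    ultimately show ?thesis using w by (simp add: power_divide divide_right_mono)
  qed
  have "\<bar>w * J - G - T * (d + 1/2) / w\<bar> = w * \<bar>J - (G * ((d + 1) / w + t) + T * ((d + 1) / w)^2 / 2) + (G * (d / w + t) + T * (d / w)^2 / 2)\<bar>"
    unfolding e using w by (simp add: abs_mult)
  also have "\<dots> \<le> w * (L * max ((d / w)^2) (((d + 1) / w)^2) * (1 / w))"
    by (rule mult_left_mono[OF h]) (use w in simp)
  also have "\<dots> = L * max ((d / w)^2) (((d + 1) / w)^2)" using w by simp
  also have "\<dots> \<le> L * (2 * (d^2 + 1) / w^2)" using m L by (rule mult_left_mono)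
  also have "\<dots> = 2 * L * (d^2 + 1) / w^2" by simp
  finally show ?thesis .
qed



theorem theorem5:
  fixes K f :: "real \<Rightarrow> real"
  assumes "is_kernel K"
    and "\<forall>u>0. alg_moment 1 K u = 0"
    and "C2_mellin f"
    and "\<forall>\<epsilon>>0. \<forall>\<^sub>F w in at_top. \<forall>x>0. \<bar>kantorovich_op K w f x - f x\<bar> \<le> \<epsilon> / w"
  shows "\<exists>c. \<forall>x>0. f x = c"
proof -
  from assms(3) obtain \<theta>1 \<theta>2 where
    d1: "\<forall>x>0. (f has_real_derivative (\<theta>1 x / x)) (at x)" and
    d2: "\<forall>x>0. (\<theta>1 has_real_derivative (\<theta>2 x / x)) (at x)" and
    b2: "bcont_pos \<theta>2"
    unfolding C2_mellin_def by blast
  from b2 obtain L0 where L0: "\<forall>x>0. \<bar>\<theta>2 x\<bar> \<le> L0" unfolding bcont_pos_def by blast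
  define L where "L = max L0 0"
  have L: "L \<ge> 0" unfolding L_def by simp
  have Lb: "\<bar>\<theta>2 x\<bar> \<le> L" if "x > 0" for x using L0 that unfolding L_def by force
  define g where "g u = f (exp u)" for u
  define g1 where "g1 u = \<theta>1 (exp u)" for u
  define g2 where "g2 u = \<theta>2 (exp u)" for u
  have dg1: "(g has_real_derivative g1 u) (at u)" for u
  proof -
    have "((\<lambda>u. f (exp u)) has_real_derivative (\<theta>1 (exp u) / exp u) * exp u) (at u)"
      by (rule DERIV_chain'[OF DERIV_exp]) (use d1 in simp)
    then show ?thesis unfolding g_def g1_def by simp
  qed
  have dg2: "(g1 has_real_derivative g2 u) (at u)" for u
  proof -
    have "((\<lambda>u. \<theta>1 (exp u)) has_real_derivative (\<theta>2 (exp u) / exp u) * exp u) (at u)"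
      by (rule DERIV_chain'[OF DERIV_exp]) (use d2 in simp)
    then show ?thesis unfolding g1_def g2_def by simp
  qed
  have bg2: "\<bar>g2 u\<bar> \<le> L" for u unfolding g2_def by (rule Lb) simp
  have k1: "\<forall>u>0. ((\<lambda>k::int. K (exp (- real_of_int k) * u)) has_sum 1) UNIV"
    using assms(1) by (simp add: is_kernel_def)
  from kernel_abs_bound[OF assms(1)] obtain M0 where M0:
    "\<forall>u>0. (\<lambda>k::int. \<bar>K (exp (- real_of_int k) * u)\<bar> * ((real_of_int k - ln u)^2 + 1)) summable_on UNIV
     \<and> infsum (\<lambda>k::int. \<bar>K (exp (- real_of_int k) * u)\<bar> * ((real_of_int k - ln u)^2 + 1)) UNIV \<le> M0"
    by blast
  define M where "M = max M0 0"
  have M: "M \<ge> 0" unfolding M_def by simp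
  have gfun: "(\<lambda>v. f (exp v)) = g" unfolding g_def by simp
  have key: "\<theta>1 x = 0" if x: "x > 0" for x
  proof (rule ccontr)
    assume nz: "\<theta>1 x \<noteq> 0"
    define t where "t = ln x"
    define \<theta> where "\<theta> = \<theta>1 x"
    have gt: "g t = f x" "g1 t = \<theta>" unfolding g_def g1_def t_def \<theta>_def using x by simp_all
    define \<epsilon> where "\<epsilon> = \<bar>\<theta>\<bar> / 8"
    have \<epsilon>: "\<epsilon> > 0" unfolding \<epsilon>_def \<theta>_def using nz by simp
    have "\<forall>\<^sub>F w in at_top. \<forall>x>0. \<bar>kantorovich_op K w f x - f x\<bar> \<le> \<epsilon> / w"
      using assms(4)[rule_format, OF \<epsilon>] .
    then obtain W where W: "\<And>w. w \<ge> W \<Longrightarrow> \<forall>x>0. \<bar>kantorovich_op K w f x - f x\<bar> \<le> \<epsilon> / w"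
      unfolding eventually_at_top_linorder by blast
    define w where "w = max (max W 1) (16 * L * M / \<bar>\<theta>\<bar> + 1)"
    have w: "w > 0" "w \<ge> W" "w > 16 * L * M / \<bar>\<theta>\<bar>" unfolding w_def by auto
    define u where "u = x powr w"
    have u: "u > 0" unfolding u_def using x by simp
    have lnu: "ln u = w * t" unfolding u_def t_def using x by (simp add: ln_powr)
    define a where "a k = K (exp (- real_of_int k) * u)" for k :: int
    define I where "I k = w * integral {real_of_int k / w .. (real_of_int k + 1) / w} g" for k :: int
    have kant: "kantorovich_op K w f x = infsum (\<lambda>k. a k * I k) UNIV"
      unfolding kantorovich_op_def a_def I_def u_def gfun by simp
    have h0: "(a has_sum 1) UNIV" unfolding a_def using k1[rule_format, OF u] .
    have m1: "infsum (\<lambda>k. a k * (real_of_int k - w * t)) UNIV = 0"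
      using assms(2)[rule_format, OF u] unfolding alg_moment_def a_def lnu by simp
    have sa: "(\<lambda>k. \<bar>a k\<bar> * ((real_of_int k - w * t)^2 + 1)) summable_on UNIV"
      and Ma: "infsum (\<lambda>k. \<bar>a k\<bar> * ((real_of_int k - w * t)^2 + 1)) UNIV \<le> M"
    proof -
      note M0u = M0[rule_format, OF u, unfolded lnu]
      show "(\<lambda>k. \<bar>a k\<bar> * ((real_of_int k - w * t)^2 + 1)) summable_on UNIV"
        unfolding a_def by (rule conjunct1[OF M0u])
      have "infsum (\<lambda>k. \<bar>a k\<bar> * ((real_of_int k - w * t)^2 + 1)) UNIV \<le> M0"
        unfolding a_def by (rule conjunct2[OF M0u])
      then show "infsum (\<lambda>k. \<bar>a k\<bar> * ((real_of_int k - w * t)^2 + 1)) UNIV \<le> M"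
        unfolding M_def by linarith
    qed
    have Ib: "\<bar>I k - g t - \<theta> * (real_of_int k - w * t + 1/2) / w\<bar>
        \<le> 2 * L * ((real_of_int k - w * t)^2 + 1) / w^2" for k
    proof -
      have ab: "real_of_int k / w \<le> (real_of_int k + 1) / w" using w by (simp add: divide_right_mono)
      note it = int_taylor[OF dg1 dg2 bg2 ab, of t]
      show ?thesis unfolding I_def gt(2)[symmetric]
      proof (rule alg_step[OF w(1) L _ _ it])
        show "real_of_int k / w = (real_of_int k - w * t) / w + t" using w by (simp add: field_simps)
        show "(real_of_int k + 1) / w = (real_of_int k - w * t + 1) / w + t" using w by (simp add: field_simps)
      qed
    qed
    have V: "\<bar>infsum (\<lambda>k. a k * I k) UNIV - g t - \<theta> / (2 * w)\<bar> \<le> 2 * L * M / w^2"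
      by (rule voron[OF h0 m1 sa Ma Ib w(1) L])
    have Wx: "\<bar>infsum (\<lambda>k. a k * I k) UNIV - f x\<bar> \<le> \<epsilon> / w"
      using W[OF w(2), rule_format, OF x] unfolding kant .
    have A: "\<bar>\<theta> / (2 * w)\<bar> \<le> \<epsilon> / w + 2 * L * M / w^2"
      using V Wx gt(1) by linarith
    have "\<bar>\<theta>\<bar> / 2 = w * \<bar>\<theta> / (2 * w)\<bar>" using w(1) by (simp add: abs_divide)
    also have "\<dots> \<le> w * (\<epsilon> / w + 2 * L * M / w^2)" by (rule mult_left_mono[OF A]) (use w in simp)
    also have "\<dots> = \<epsilon> + 2 * L * M / w" using w(1) by (simp add: field_simps power2_eq_square)
    finally have B: "\<bar>\<theta>\<bar> / 2 \<le> \<epsilon> + 2 * L * M / w" .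
    have th0: "\<bar>\<theta>\<bar> > 0" unfolding \<theta>_def using nz by simp
    have "16 * L * M < w * \<bar>\<theta>\<bar>" using w(3) th0 by (simp add: pos_divide_less_eq)
    then have "2 * L * M / w < \<bar>\<theta>\<bar> / 8" using w(1) by (simp add: divide_less_eq field_simps)
    then show False using B th0 unfolding \<epsilon>_def by linarith
  qed
  have nb: "norm (f y - f 1) \<le> 0 * norm (y - 1)" if y: "y > 0" for y
  proof (rule field_differentiable_bound[where S="{0<..}" and f'="\<lambda>x. \<theta>1 x / x"])
    show "convex {0::real<..}" by simp
    show "y \<in> {0<..}" using y by simp
    show "1 \<in> {0::real<..}" by simp
    fix z :: real assume z: "z \<in> {0<..}"
    show "(f has_field_derivative \<theta>1 z / z) (at z within {0<..})"
    proof (rule has_field_derivative_at_within)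
      have "z > 0" using z by simp
      then show "(f has_field_derivative \<theta>1 z / z) (at z)" using d1 by blast
    qed
    have "z > 0" using z by simp
    then have "\<theta>1 z = 0" by (rule key)
    then show "norm (\<theta>1 z / z) \<le> 0" by simp
  qed
  have "\<forall>y>0. f y = f 1"
  proof (intro allI impI)
    fix y :: real assume "y > 0"
    from nb[OF this] have "\<bar>f y - f 1\<bar> \<le> 0" by simp
    then show "f y = f 1" by simp
  qed
  then show ?thesis by blast
qed

end
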